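(* Let $N\ge 4$ and $\bm X^{(N)} := (1+\frac{1}{N-1})\bm I_N - \frac{1}{N-1}\bm 1\bm 1^\top$. Define $\bm Y^{(N)}\in\mathbb{R}^{N^2\times N^2}$ by $$Y^{(N)}_{(ij)(k\ell)} = \begin{cases} 1 & |\mathsf{odd}((ijk\ell))| = 0,\\ -\frac{1}{N-1} & |\mathsf{odd}((ijk\ell))| = 2,\\ \frac{3}{(N-1)(N-3)} & |\mathsf{odd}((ijk\ell))| = 4.\end{cases}$$ Then $\bm Y^{(N)}$ is a degree 4 pseudomoment matrix extending $\bm X^{(N)}$.
   Context: For a string $(ijk\ell)$ of symbols from $[N]$, $\mathsf{odd}((ijk\ell))$ is the set of symbols occurring an odd number of times in it (its size is always $0$, $2$ or $4$). A degree 4 pseudomoment matrix is a matrix $\bm Y \in \mathbb{R}^{N^2\times N^2}$, rows and columns indexed by pairs $(ij)\in[N]^2$ (lexicographically ordered), such that: (1) $\bm Y\succeq 0$; (2) $Y_{(ij)(kk)}$ does not depend on $k$; (3) $Y_{(ii)(ii)} = 1$ for all $i$; (4) $Y_{(ij)(k\ell)}$ is invariant under all permutations of the four indices $i,j,k,\ell$. Such $\bm Y$ extends $\bm X\in\mathbb{R}^{N\times N}_{\mathrm{sym}}$ if $Y_{(1i)(1j)} = X_{ij}$ for all $i,j$. *)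

theory Defs
  imports Complex_Main "HOL-Library.Multiset"
begin

text \<open>Symbols are taken from [N] = {1..N}. Matrices indexed by pairs of [N] are
  represented as functions on pairs (values outside [N]^2 are irrelevant).\<close>

definition odd_syms :: "nat \<Rightarrow> nat \<Rightarrow> nat \<Rightarrow> nat \<Rightarrow> nat set" where
  "odd_syms i j k l = {s \<in> {i, j, k, l}. odd (length (filter (\<lambda>t. t = s) [i, j, k, l]))}"

definition psd_pairs :: "nat \<Rightarrow> (nat \<times> nat \<Rightarrow> nat \<times> nat \<Rightarrow> real) \<Rightarrow> bool" where
  "psd_pairs N Y \<longleftrightarrow>
     (\<forall>p\<in>{1..N}\<times>{1..N}. \<forall>q\<in>{1..N}\<times>{1..N}. Y p q = Y q p) \<and>
     (\<forall>v :: nat \<times> nat \<Rightarrow> real.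
        (\<Sum>p\<in>{1..N}\<times>{1..N}. \<Sum>q\<in>{1..N}\<times>{1..N}. v p * Y p q * v q) \<ge> 0)"

definition deg4_pseudomoment :: "nat \<Rightarrow> (nat \<times> nat \<Rightarrow> nat \<times> nat \<Rightarrow> real) \<Rightarrow> bool" where
  "deg4_pseudomoment N Y \<longleftrightarrow>
     psd_pairs N Y \<and>
     (\<forall>i\<in>{1..N}. \<forall>j\<in>{1..N}. \<forall>k\<in>{1..N}. \<forall>k'\<in>{1..N}. Y (i, j) (k, k) = Y (i, j) (k', k')) \<and>
     (\<forall>i\<in>{1..N}. Y (i, i) (i, i) = 1) \<and>
     (\<forall>i\<in>{1..N}. \<forall>j\<in>{1..N}. \<forall>k\<in>{1..N}. \<forall>l\<in>{1..N}. \<forall>a b c d.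
        mset [a, b, c, d] = mset [i, j, k, l] \<longrightarrow> Y (a, b) (c, d) = Y (i, j) (k, l))"

definition extends :: "nat \<Rightarrow> (nat \<times> nat \<Rightarrow> nat \<times> nat \<Rightarrow> real) \<Rightarrow> (nat \<Rightarrow> nat \<Rightarrow> real) \<Rightarrow> bool" where
  "extends N Y X \<longleftrightarrow> (\<forall>i\<in>{1..N}. \<forall>j\<in>{1..N}. Y (1, i) (1, j) = X i j)"

definition Xcor :: "nat \<Rightarrow> nat \<Rightarrow> nat \<Rightarrow> real" where
  "Xcor N i j = (1 + 1 / (real N - 1)) * (if i = j then 1 else 0) - 1 / (real N - 1)"

definition Ycor :: "nat \<Rightarrow> nat \<times> nat \<Rightarrow> nat \<times> nat \<Rightarrow> real" where
  "Ycor N p q = (case (p, q) of ((i, j), (k, l)) \<Rightarrow>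
     (if card (odd_syms i j k l) = 0 then 1
      else if card (odd_syms i j k l) = 2 then - 1 / (real N - 1)
      else 3 / ((real N - 1) * (real N - 3))))"

end

theory Submission
  imports Defs
begin
lemma CI: "{s \<in> insert a A. P s} = (if P a then insert a {s\<in>A. P s} else {s\<in>A. P s})" by auto
lemma CE: "{s \<in> {}. P s} = {}" by auto
lemma card_odd: "card (odd_syms i j k l) = (if i=j then (if k = l then 0 else 2) else if k = l then 2 else
   if i = k then (if j = l then 0 else 2) else if i = l then (if j = k then 0 else 2) else if j = k then 2 else if j = l then 2 else 4)"
  unfolding odd_syms_def CI CE
  by (cases "i=j"; cases "i=k"; cases "i=l"; cases "j=k"; cases "j=l"; cases "k=l") (simp_all add: card_insert_if)
definition ee :: "nat \<Rightarrow> nat \<Rightarrow> real" where "ee x y = (if x = y then 1 else 0)"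
definition MM :: "nat set \<Rightarrow> (nat\<times>nat \<Rightarrow> real) \<Rightarrow> (nat\<Rightarrow>nat\<Rightarrow>nat\<Rightarrow>nat\<Rightarrow>real) \<Rightarrow> real" where
 "MM A v f = (\<Sum>i\<in>A. \<Sum>j\<in>A. \<Sum>k\<in>A. \<Sum>l\<in>A. v(i,j)*v(k,l)*f i j k l)"
lemma ee_refl[simp]: "ee i i = 1" by (simp add: ee_def)
lemma C1a: "finite A \<Longrightarrow> (\<Sum>k\<in>A. h k * ee i k) = (if i\<in>A then h i else 0)"
  by (simp add: ee_def if_distrib cong: if_cong)
lemma C1b: "finite A \<Longrightarrow> (\<Sum>k\<in>A. h k * ee k i) = (if i\<in>A then h i else 0)"
  by (simp add: ee_def if_distrib cong: if_cong)
lemma C2a: "finite A \<Longrightarrow> (\<Sum>k\<in>A. \<Sum>l\<in>A. h k l * ee i k) = (if i\<in>A then (\<Sum>l\<in>A. h i l) else 0)"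
  by (subst sum.swap) (simp add: C1a)
lemma C2b: "finite A \<Longrightarrow> (\<Sum>k\<in>A. \<Sum>l\<in>A. h k l * ee k i) = (if i\<in>A then (\<Sum>l\<in>A. h i l) else 0)"
  by (subst sum.swap) (simp add: C1b)
lemma C3a: assumes "finite A" shows "(\<Sum>k\<in>A. \<Sum>l\<in>A. \<Sum>m\<in>A. h k l m * ee i k) = (if i\<in>A then (\<Sum>l\<in>A. \<Sum>m\<in>A. h i l m) else 0)"
proof -
  have "(\<Sum>k\<in>A. \<Sum>l\<in>A. \<Sum>m\<in>A. h k l m * ee i k) = (\<Sum>l\<in>A. \<Sum>k\<in>A. \<Sum>m\<in>A. h k l m * ee i k)"
    by (rule sum.swap)
  also have "\<dots> = (\<Sum>l\<in>A. \<Sum>m\<in>A. \<Sum>k\<in>A. h k l m * ee i k)"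
    by (rule sum.cong[OF refl], rule sum.swap)
  finally show ?thesis using assms by (simp add: C1a)
qed
lemma C3b: assumes "finite A" shows "(\<Sum>k\<in>A. \<Sum>l\<in>A. \<Sum>m\<in>A. h k l m * ee k i) = (if i\<in>A then (\<Sum>l\<in>A. \<Sum>m\<in>A. h i l m) else 0)"
proof -
  have "(\<Sum>k\<in>A. \<Sum>l\<in>A. \<Sum>m\<in>A. h k l m * ee k i) = (\<Sum>l\<in>A. \<Sum>k\<in>A. \<Sum>m\<in>A. h k l m * ee k i)"
    by (rule sum.swap)
  also have "\<dots> = (\<Sum>l\<in>A. \<Sum>m\<in>A. \<Sum>k\<in>A. h k l m * ee k i)"
    by (rule sum.cong[OF refl], rule sum.swap)
  finally show ?thesis using assms by (simp add: C1b)
qed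
lemmas C = C1a C1b C2a C2b C3a C3b

definition FF :: "real \<Rightarrow> real \<Rightarrow> nat\<Rightarrow>nat\<Rightarrow>nat\<Rightarrow>nat\<Rightarrow>real" where
 "FF b g i j k l = g * 1 + (b-g)*(ee i j + ee k l + ee i k + ee j l + ee i l + ee j k)
   + (1-2*b+g)*(ee i j*ee k l + ee i k*ee j l + ee i l*ee j k)
   + (2*(g-b))*(ee i j*ee i k + ee i j*ee i l + ee i k*ee i l + ee j k*ee j l)
   + (-2+8*b-6*g)*(ee i j*ee i k*ee i l)"

lemma FFgen: "FF b g i j k l = (if card (odd_syms i j k l) = 0 then 1 else if card (odd_syms i j k l) = 2 then b else g)"
  unfolding card_odd FF_def ee_def
  by (cases "i=j"; cases "i=k"; cases "i=l"; cases "j=k"; cases "j=l"; cases "k=l") (simp_all add: algebra_simps)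
lemma Ycor_FF: "Ycor N (i,j) (k,l) = FF (- 1 / (real N - 1)) (3 / ((real N - 1) * (real N - 3))) i j k l"
  unfolding Ycor_def FFgen by simp

lemma MM_add: "MM A v (\<lambda>i j k l. f i j k l + h i j k l) = MM A v f + MM A v h"
  unfolding MM_def by (simp add: sum.distrib algebra_simps)
lemma MM_cmul: "MM A v (\<lambda>i j k l. a * f i j k l) = a * MM A v f"
  unfolding MM_def by (simp add: sum_distrib_left algebra_simps)
lemma MM_const: "MM A v (\<lambda>i j k l. a) = a * MM A v (\<lambda>i j k l. 1)"
  unfolding MM_def by (simp add: sum_distrib_left algebra_simps)

definition sS :: "nat set \<Rightarrow> (nat\<times>nat\<Rightarrow>real) \<Rightarrow> real" where "sS A v = (\<Sum>i\<in>A. \<Sum>j\<in>A. v(i,j))"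
definition sT :: "nat set \<Rightarrow> (nat\<times>nat\<Rightarrow>real) \<Rightarrow> real" where "sT A v = (\<Sum>i\<in>A. v(i,i))"
definition sV :: "nat set \<Rightarrow> (nat\<times>nat\<Rightarrow>real) \<Rightarrow> real" where "sV A v = (\<Sum>i\<in>A. \<Sum>j\<in>A. v(i,j)*v(i,j))"
definition sW :: "nat set \<Rightarrow> (nat\<times>nat\<Rightarrow>real) \<Rightarrow> real" where "sW A v = (\<Sum>i\<in>A. \<Sum>j\<in>A. v(i,j)*v(j,i))"
definition qq :: "nat set \<Rightarrow> (nat\<times>nat\<Rightarrow>real) \<Rightarrow> nat \<Rightarrow> real" where "qq A v a = (\<Sum>b\<in>A. v(a,b)+v(b,a))"
definition pp :: "nat set \<Rightarrow> (nat\<times>nat\<Rightarrow>real) \<Rightarrow> nat \<Rightarrow> real" where "pp A v a = qq A v a - 2*v(a,a)"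
definition sRq :: "nat set \<Rightarrow> (nat\<times>nat\<Rightarrow>real) \<Rightarrow> real" where "sRq A v = (\<Sum>a\<in>A. pp A v a * pp A v a)"
definition sRd :: "nat set \<Rightarrow> (nat\<times>nat\<Rightarrow>real) \<Rightarrow> real" where "sRd A v = (\<Sum>a\<in>A. pp A v a * v(a,a))"
definition sDd :: "nat set \<Rightarrow> (nat\<times>nat\<Rightarrow>real) \<Rightarrow> real" where "sDd A v = (\<Sum>a\<in>A. v(a,a)*v(a,a))"
definition sRs :: "nat set \<Rightarrow> (nat\<times>nat\<Rightarrow>real) \<Rightarrow> real" where "sRs A v = (\<Sum>a\<in>A. pp A v a)"

lemma Rs_eq: "finite A \<Longrightarrow> sRs A v = 2 * sS A v - 2 * sT A v"
proof -
  assume A: "finite A"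
  have "(\<Sum>a\<in>A. \<Sum>b\<in>A. v(b,a)) = (\<Sum>b\<in>A. \<Sum>a\<in>A. v(b,a))" by (rule sum.swap)
  thus ?thesis unfolding sRs_def pp_def qq_def sS_def sT_def
    by (simp add: sum_subtractf sum.distrib sum_distrib_left)
qed

lemma pull2: "(\<Sum>i\<in>A. \<Sum>j\<in>A. v(i,j) * (X::real)) = (\<Sum>i\<in>A. \<Sum>j\<in>A. v(i,j)) * X"
  by (simp add: sum_distrib_right)
lemma pull1: "(\<Sum>i\<in>A. v(i,i) * (X::real)) = (\<Sum>i\<in>A. v(i,i)) * X"
  by (simp add: sum_distrib_right)
lemma P1: "finite A \<Longrightarrow> MM A v (\<lambda>i j k l. 1) = sS A v * sS A v"
proof -
  have "MM A v (\<lambda>i j k l. 1) = (\<Sum>i\<in>A. \<Sum>j\<in>A. v(i,j) * sS A v)"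
    unfolding MM_def sS_def by (simp add: sum_distrib_left)
  thus ?thesis unfolding pull2 sS_def by simp
qed
lemma P2a: "finite A \<Longrightarrow> MM A v (\<lambda>i j k l. ee i j) = sT A v * sS A v"
proof -
  assume A: "finite A"
  have "MM A v (\<lambda>i j k l. ee i j) = (\<Sum>i\<in>A. v(i,i) * sS A v)"
    unfolding MM_def sS_def using A by (simp add: C sum_distrib_left mult.assoc[symmetric])
  thus ?thesis unfolding pull1 sT_def by simp
qed
lemma P2b: "finite A \<Longrightarrow> MM A v (\<lambda>i j k l. ee k l) = sT A v * sS A v"
proof -
  assume A: "finite A"
  have "MM A v (\<lambda>i j k l. ee k l) = (\<Sum>i\<in>A. \<Sum>j\<in>A. v(i,j) * sT A v)"
    unfolding MM_def sT_def using A by (simp add: C sum_distrib_left mult.assoc[symmetric])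
  thus ?thesis unfolding pull2 sS_def by simp
qed
lemma P4a: "finite A \<Longrightarrow> MM A v (\<lambda>i j k l. ee i j * ee k l) = sT A v * sT A v"
  unfolding MM_def sT_def by (simp add: C sum_product mult.assoc[symmetric])
lemma P4b: "finite A \<Longrightarrow> MM A v (\<lambda>i j k l. ee i k * ee j l) = sV A v"
  unfolding MM_def sV_def by (simp add: C sum_product mult.assoc[symmetric])
lemma P4c: "finite A \<Longrightarrow> MM A v (\<lambda>i j k l. ee i l * ee j k) = sW A v"
  unfolding MM_def sW_def by (simp add: C sum_product mult.assoc[symmetric])
lemma P6: "finite A \<Longrightarrow> MM A v (\<lambda>i j k l. ee i j * ee i k * ee i l) = sDd A v"
  unfolding MM_def sDd_def by (simp add: C sum_product mult.assoc[symmetric])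

lemma qq_split: "qq A v a = (\<Sum>b\<in>A. v(a,b)) + (\<Sum>b\<in>A. v(b,a))"
  by (simp add: qq_def sum.distrib)
lemma sq4: "((x::real)+y)*(x+y) = x*x + y*y + x*y + y*x"
  by (simp add: algebra_simps)

lemma P3: assumes A: "finite A"
  shows "MM A v (\<lambda>i j k l. ee i k) + MM A v (\<lambda>i j k l. ee j l) + MM A v (\<lambda>i j k l. ee i l) + MM A v (\<lambda>i j k l. ee j k)
    = sRq A v + 4 * sRd A v + 4 * sDd A v"
proof -
  have a: "MM A v (\<lambda>i j k l. ee i k) = (\<Sum>a\<in>A. \<Sum>b\<in>A. \<Sum>c\<in>A. v(a,b)*v(a,c))"
    unfolding MM_def using A by (simp add: C mult.assoc[symmetric])
  have b: "MM A v (\<lambda>i j k l. ee j l) = (\<Sum>a\<in>A. \<Sum>b\<in>A. \<Sum>c\<in>A. v(b,a)*v(c,a))"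
    unfolding MM_def using A by (simp add: C mult.assoc[symmetric]) (rule sum.swap)
  have c: "MM A v (\<lambda>i j k l. ee i l) = (\<Sum>a\<in>A. \<Sum>b\<in>A. \<Sum>c\<in>A. v(a,b)*v(c,a))"
    unfolding MM_def using A by (simp add: C mult.assoc[symmetric])
  have d: "MM A v (\<lambda>i j k l. ee j k) = (\<Sum>a\<in>A. \<Sum>b\<in>A. \<Sum>c\<in>A. v(b,a)*v(a,c))"
    unfolding MM_def using A by (simp add: C mult.assoc[symmetric]) (rule sum.swap)
  have e1: "\<And>a. qq A v a * qq A v a = (\<Sum>b\<in>A. \<Sum>c\<in>A. v(a,b)*v(a,c)) + (\<Sum>b\<in>A. \<Sum>c\<in>A. v(b,a)*v(c,a))
       + (\<Sum>b\<in>A. \<Sum>c\<in>A. v(a,b)*v(c,a)) + (\<Sum>b\<in>A. \<Sum>c\<in>A. v(b,a)*v(a,c))"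
    by (simp only: qq_split sq4 sum_product)
  have e: "(\<Sum>a\<in>A. qq A v a * qq A v a) = (\<Sum>a\<in>A. \<Sum>b\<in>A. \<Sum>c\<in>A. v(a,b)*v(a,c))
     + (\<Sum>a\<in>A. \<Sum>b\<in>A. \<Sum>c\<in>A. v(b,a)*v(c,a)) + (\<Sum>a\<in>A. \<Sum>b\<in>A. \<Sum>c\<in>A. v(a,b)*v(c,a))
     + (\<Sum>a\<in>A. \<Sum>b\<in>A. \<Sum>c\<in>A. v(b,a)*v(a,c))"
    by (simp only: e1 sum.distrib)
  have f1: "\<And>a. qq A v a * qq A v a = pp A v a * pp A v a + 4*(pp A v a * v(a,a)) + 4*(v(a,a)*v(a,a))"
    by (simp add: pp_def algebra_simps)
  have f: "(\<Sum>a\<in>A. qq A v a * qq A v a) = sRq A v + 4 * sRd A v + 4 * sDd A v"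
    unfolding sRq_def sRd_def sDd_def f1 by (simp only: sum.distrib sum_distrib_left)
  show ?thesis unfolding a b c d using e f by linarith
qed

lemma P5: assumes A: "finite A"
  shows "MM A v (\<lambda>i j k l. ee i j*ee i k) + MM A v (\<lambda>i j k l. ee i j*ee i l) + MM A v (\<lambda>i j k l. ee i k*ee i l) + MM A v (\<lambda>i j k l. ee j k*ee j l)
    = 2 * sRd A v + 4 * sDd A v"
proof -
  have a: "MM A v (\<lambda>i j k l. ee i j*ee i k) = (\<Sum>a\<in>A. \<Sum>b\<in>A. v(a,a)*v(a,b))"
    unfolding MM_def using A by (simp add: C mult.assoc[symmetric])
  have b: "MM A v (\<lambda>i j k l. ee i j*ee i l) = (\<Sum>a\<in>A. \<Sum>b\<in>A. v(a,a)*v(b,a))"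
    unfolding MM_def using A by (simp add: C mult.assoc[symmetric])
  have c0: "MM A v (\<lambda>i j k l. ee i k*ee i l) = (\<Sum>a\<in>A. \<Sum>b\<in>A. v(a,b)*v(a,a))"
    unfolding MM_def using A by (simp add: C mult.assoc[symmetric])
  have c1: "(\<Sum>a\<in>A. \<Sum>b\<in>A. v(a,b)*v(a,a)) = (\<Sum>a\<in>A. \<Sum>b\<in>A. v(a,a)*v(a,b))"
    by (simp only: mult.commute)
  have d0: "MM A v (\<lambda>i j k l. ee j k*ee j l) = (\<Sum>a\<in>A. \<Sum>b\<in>A. v(a,b)*v(b,b))"
    unfolding MM_def using A by (simp add: C mult.assoc[symmetric])
  have d1: "(\<Sum>a\<in>A. \<Sum>b\<in>A. v(a,b)*v(b,b)) = (\<Sum>b\<in>A. \<Sum>a\<in>A. v(a,b)*v(b,b))"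
    by (rule sum.swap)
  have d2: "(\<Sum>b\<in>A. \<Sum>a\<in>A. v(a,b)*v(b,b)) = (\<Sum>a\<in>A. \<Sum>b\<in>A. v(a,a)*v(b,a))"
    by (simp only: mult.commute)
  have f1: "\<And>a. v(a,a) * qq A v a = pp A v a * v(a,a) + 2 * (v(a,a)*v(a,a))"
    by (simp add: pp_def algebra_simps)
  have f: "(\<Sum>a\<in>A. v(a,a) * qq A v a) = sRd A v + 2 * sDd A v"
    unfolding sRd_def sDd_def f1 by (simp only: sum.distrib sum_distrib_left)
  have e: "(\<Sum>a\<in>A. v(a,a) * qq A v a) = (\<Sum>a\<in>A. \<Sum>b\<in>A. v(a,a)*v(a,b)) + (\<Sum>a\<in>A. \<Sum>b\<in>A. v(a,a)*v(b,a))"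
    by (simp only: qq_split distrib_left sum_distrib_left sum.distrib)
  show ?thesis unfolding a b c0 c1 d0 d1 d2 using e f by linarith
qed

lemma SQ: fixes x :: "nat \<Rightarrow> nat \<Rightarrow> real" assumes A: "finite A"
  shows "(\<Sum>a\<in>A. \<Sum>b\<in>A. (x a b + m*p a + m*p b + \<kappa>)*(x a b + m*p a + m*p b + \<kappa>)) =
    (\<Sum>a\<in>A. \<Sum>b\<in>A. x a b * x a b) + 2*m*(\<Sum>a\<in>A. p a * (\<Sum>b\<in>A. x a b)) + 2*m*(\<Sum>b\<in>A. p b * (\<Sum>a\<in>A. x a b))
    + 2*\<kappa>*(\<Sum>a\<in>A. \<Sum>b\<in>A. x a b) + 2*real (card A)*m*m*(\<Sum>a\<in>A. p a * p a) + 2*m*m*(\<Sum>a\<in>A. p a)*(\<Sum>a\<in>A. p a)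
    + 4*real (card A)*\<kappa>*m*(\<Sum>a\<in>A. p a) + real (card A) * real (card A) * \<kappa> * \<kappa>"
proof -
  have s: "(\<Sum>b\<in>A. p b * (\<Sum>a\<in>A. x a b)) = (\<Sum>a\<in>A. \<Sum>b\<in>A. p b * x a b)"
    by (simp add: sum_distrib_left) (rule sum.swap)
  show ?thesis unfolding s
    by (simp add: algebra_simps sum.distrib sum_distrib_left sum_distrib_right sum_product)
qed
lemma algxyz: fixes n x y t S T V W Rq Rd Dd :: real
  assumes n: "n \<ge> 4" and y: "y = n-1" and x: "x = n-2" and t: "t = n-3"
  shows "3/(y*t)*(S*S) + (-1/y-3/(y*t))*(T*S + T*S + (Rq+4*Rd+4*Dd)) + (1-2*(-1/y)+3/(y*t))*(T*T + V + W) + 2*(3/(y*t)- -1/y)*(2*Rd+4*Dd) + (-2+8*(-1/y)-6*(3/(y*t)))*Dd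
   = (T - (2*S-2*T)/(2*y))*(T - (2*S-2*T)/(2*y)) + n*x/(2*y*t) *
     (((2*V+2*W) + 2*(-1/x)*(Rq+2*Rd) + 2*(-1/x)*(Rq+2*Rd) + 2*((2*S-2*T)/(y*x))*(2*S) + 2*n*(-1/x)*(-1/x)*Rq + 2*(-1/x)*(-1/x)*(2*S-2*T)*(2*S-2*T) + 4*n*((2*S-2*T)/(y*x))*(-1/x)*(2*S-2*T) + n*n*((2*S-2*T)/(y*x))*((2*S-2*T)/(y*x)))
     - (4*Dd + 8*(-1/x)*Rd + 4*(-1/x)*(-1/x)*Rq + 4*((2*S-2*T)/(y*x))*T + 4*((2*S-2*T)/(y*x))*(-1/x)*(2*S-2*T) + n*((2*S-2*T)/(y*x))*((2*S-2*T)/(y*x))))"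
proof -
  define b where "b = -1/y"
  define g where "g = 3/(y*t)"
  define m where "m = -1/x"
  define k where "k = (2*S-2*T)/(y*x)"
  define C where "C = n*x/(2*y*t)"
  define q where "q = (T - (2*S-2*T)/(2*y))"
  have n1: "y \<noteq> 0" and n2: "x \<noteq> 0" and n3: "t\<noteq>0" using n x y t by auto
  have c1: "1-2*b+g = 2*C" unfolding b_def g_def C_def using n1 n3 by (simp add: field_simps) (simp add: algebra_simps x y t)
  have c2: "b-g = C*(4*m + 2*n*m*m - 4*m*m)" unfolding b_def g_def C_def m_def using n1 n2 n3
    by (simp add: field_simps) (simp add: algebra_simps x y t)
  have c3: "-2+4*b-2*g = -4*C" unfolding b_def g_def C_def using n1 n3 by (simp add: field_simps) (simp add: algebra_simps x y t)
  define D where "D = S - T"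
  have kD: "k = 2*D/(y*x)" unfolding k_def D_def by simp
  have Bz: "4*k*S + 2*m*m*(2*S-2*T)*(2*S-2*T) + 4*n*k*m*(2*S-2*T) + n*n*k*k - 4*k*T - 4*k*m*(2*S-2*T) - n*k*k
     = 4*D*D/(y*x)"
  proof -
    have e: "2*S-2*T = 2*D" "4*k*S - 4*k*T = 4*k*D" unfolding D_def by (simp_all add: algebra_simps)
    have "4*k*S + 2*m*m*(2*S-2*T)*(2*S-2*T) + 4*n*k*m*(2*S-2*T) + n*n*k*k - 4*k*T - 4*k*m*(2*S-2*T) - n*k*k
       = 4*k*D + 8*m*m*D*D + 8*n*k*m*D + n*n*k*k - 8*k*m*D - n*k*k"
      using e by (simp add: algebra_simps)
    also have "\<dots> = 4*D*D/(y*x)" unfolding kD m_def using n1 n2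
      by (simp add: field_simps) (simp add: algebra_simps x y t)
    finally show ?thesis .
  qed
  have Aq: "g*(S*S) + 2*(b-g)*(T*S) + (1-2*b+g)*(T*T) = q*q + C*(4*D*D/(y*x))"
  proof -
    have S: "S = T + D" unfolding D_def by simp
    show ?thesis unfolding S q_def b_def g_def C_def using n1 n2 n3
      by (simp add: field_simps) (simp add: algebra_simps x y t)
  qed
  have L: "g*(S*S) + (b-g)*(T*S + T*S + (Rq+4*Rd+4*Dd)) + (1-2*b+g)*(T*T + V + W) + 2*(g-b)*(2*Rd+4*Dd) + (-2+8*b-6*g)*Dd
     = (g*(S*S) + 2*(b-g)*(T*S) + (1-2*b+g)*(T*T)) + (1-2*b+g)*(V+W) + (b-g)*Rq + (-2+4*b-2*g)*Dd"
    by (simp add: algebra_simps)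
  have R: "((2*V+2*W) + 2*m*(Rq+2*Rd) + 2*m*(Rq+2*Rd) + 2*k*(2*S) + 2*n*m*m*Rq + 2*m*m*(2*S-2*T)*(2*S-2*T) + 4*n*k*m*(2*S-2*T) + n*n*k*k)
     - (4*Dd + 8*m*Rd + 4*m*m*Rq + 4*k*T + 4*k*m*(2*S-2*T) + n*k*k)
     = 2*(V+W) + (4*m + 2*n*m*m - 4*m*m)*Rq - 4*Dd +
       (4*k*S + 2*m*m*(2*S-2*T)*(2*S-2*T) + 4*n*k*m*(2*S-2*T) + n*n*k*k - 4*k*T - 4*k*m*(2*S-2*T) - n*k*k)"
    by (simp add: algebra_simps)
  have "g*(S*S) + (b-g)*(T*S + T*S + (Rq+4*Rd+4*Dd)) + (1-2*b+g)*(T*T + V + W) + 2*(g-b)*(2*Rd+4*Dd) + (-2+8*b-6*g)*Dd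
     = (g*(S*S) + 2*(b-g)*(T*S) + (1-2*b+g)*(T*T)) + (1-2*b+g)*(V+W) + (b-g)*Rq + (-2+4*b-2*g)*Dd" by (rule L)
  also have "\<dots> = (q*q + C*(4*D*D/(y*x))) + (2*C)*(V+W) + (C*(4*m + 2*n*m*m - 4*m*m))*Rq + (-4*C)*Dd"
    by (unfold Aq, unfold c1 c2 c3, rule refl)
  also have "\<dots> = q*q + C*(2*(V+W) + (4*m + 2*n*m*m - 4*m*m)*Rq - 4*Dd + 4*D*D/(y*x))"
    by (simp add: algebra_simps)
  also have "\<dots> = q*q + C*(((2*V+2*W) + 2*m*(Rq+2*Rd) + 2*m*(Rq+2*Rd) + 2*k*(2*S) + 2*n*m*m*Rq + 2*m*m*(2*S-2*T)*(2*S-2*T) + 4*n*k*m*(2*S-2*T) + n*n*k*k)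
     - (4*Dd + 8*m*Rd + 4*m*m*Rq + 4*k*T + 4*k*m*(2*S-2*T) + n*k*k))"
    unfolding R Bz ..
  finally have "g*(S*S) + (b-g)*(T*S + T*S + (Rq+4*Rd+4*Dd)) + (1-2*b+g)*(T*T + V + W) + 2*(g-b)*(2*Rd+4*Dd) + (-2+8*b-6*g)*Dd
     = q*q + C*(((2*V+2*W) + 2*m*(Rq+2*Rd) + 2*m*(Rq+2*Rd) + 2*k*(2*S) + 2*n*m*m*Rq + 2*m*m*(2*S-2*T)*(2*S-2*T) + 4*n*k*m*(2*S-2*T) + n*n*k*k)
     - (4*Dd + 8*m*Rd + 4*m*m*Rq + 4*k*T + 4*k*m*(2*S-2*T) + n*k*k))" .
  thus ?thesis unfolding b_def g_def m_def k_def C_def q_def by (simp add: mult.assoc)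
qed

lemma alg: fixes n S T V W Rq Rd Dd :: real
  assumes n: "n \<ge> 4"
  shows "3/((n-1)*(n-3))*(S*S) + (-1/(n-1)-3/((n-1)*(n-3)))*(T*S + T*S + (Rq+4*Rd+4*Dd)) + (1-2*(-1/(n-1))+3/((n-1)*(n-3)))*(T*T + V + W) + 2*(3/((n-1)*(n-3))- -1/(n-1))*(2*Rd+4*Dd) + (-2+8*(-1/(n-1))-6*(3/((n-1)*(n-3))))*Dd
   = (T - (2*S-2*T)/(2*(n-1)))*(T - (2*S-2*T)/(2*(n-1))) + n*(n-2)/(2*(n-1)*(n-3)) *
     (((2*V+2*W) + 2*(-1/(n-2))*(Rq+2*Rd) + 2*(-1/(n-2))*(Rq+2*Rd) + 2*((2*S-2*T)/((n-1)*(n-2)))*(2*S) + 2*n*(-1/(n-2))*(-1/(n-2))*Rq + 2*(-1/(n-2))*(-1/(n-2))*(2*S-2*T)*(2*S-2*T) + 4*n*((2*S-2*T)/((n-1)*(n-2)))*(-1/(n-2))*(2*S-2*T) + n*n*((2*S-2*T)/((n-1)*(n-2)))*((2*S-2*T)/((n-1)*(n-2))))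
     - (4*Dd + 8*(-1/(n-2))*Rd + 4*(-1/(n-2))*(-1/(n-2))*Rq + 4*((2*S-2*T)/((n-1)*(n-2)))*T + 4*((2*S-2*T)/((n-1)*(n-2)))*(-1/(n-2))*(2*S-2*T) + n*((2*S-2*T)/((n-1)*(n-2)))*((2*S-2*T)/((n-1)*(n-2)))))"
  by (rule algxyz[OF n]) simp_all

lemma ZF: fixes m \<kappa> :: real assumes A: "finite A"
  shows "(\<Sum>a\<in>A. \<Sum>b\<in>A. ((v(a,b)+v(b,a)) + m*pp A v a + m*pp A v b + \<kappa>)*((v(a,b)+v(b,a)) + m*pp A v a + m*pp A v b + \<kappa>))
   = (2*sV A v+2*sW A v) + 2*m*(sRq A v+2*sRd A v) + 2*m*(sRq A v+2*sRd A v) + 2*\<kappa>*(2*sS A v) + 2*real (card A)*m*m*sRq A v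
     + 2*m*m*sRs A v*sRs A v + 4*real (card A)*\<kappa>*m*sRs A v + real (card A)*real (card A)*\<kappa>*\<kappa>"
proof -
  have f1: "\<And>a. (\<Sum>b\<in>A. v(a,b)+v(b,a)) = qq A v a" by (simp add: qq_def)
  have f2: "\<And>b. (\<Sum>a\<in>A. v(a,b)+v(b,a)) = qq A v b" by (simp add: qq_def add.commute)
  have s1: "(\<Sum>a\<in>A. \<Sum>b\<in>A. v(b,a)*v(b,a)) = sV A v" unfolding sV_def by (rule sum.swap)
  have s2: "(\<Sum>a\<in>A. \<Sum>b\<in>A. v(b,a)*v(a,b)) = sW A v" unfolding sW_def by (subst sum.swap) (simp add: mult.commute)
  have f3: "(\<Sum>a\<in>A. \<Sum>b\<in>A. (v(a,b)+v(b,a))*(v(a,b)+v(b,a))) = 2*sV A v+2*sW A v"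
  proof -
    have "(\<Sum>a\<in>A. \<Sum>b\<in>A. (v(a,b)+v(b,a))*(v(a,b)+v(b,a)))
        = (\<Sum>a\<in>A. \<Sum>b\<in>A. v(a,b)*v(a,b) + v(b,a)*v(b,a) + v(a,b)*v(b,a) + v(b,a)*v(a,b))"
      by (intro sum.cong refl) (simp add: algebra_simps)
    also have "\<dots> = (\<Sum>a\<in>A. \<Sum>b\<in>A. v(a,b)*v(a,b)) + (\<Sum>a\<in>A. \<Sum>b\<in>A. v(b,a)*v(b,a))
        + (\<Sum>a\<in>A. \<Sum>b\<in>A. v(a,b)*v(b,a)) + (\<Sum>a\<in>A. \<Sum>b\<in>A. v(b,a)*v(a,b))"
      by (simp only: sum.distrib)
    finally show ?thesis using s1 s2 unfolding sV_def sW_def by linarith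
  qed
  have f4: "(\<Sum>a\<in>A. \<Sum>b\<in>A. v(a,b)+v(b,a)) = 2*sS A v"
  proof -
    have "(\<Sum>a\<in>A. \<Sum>b\<in>A. v(b,a)) = sS A v" unfolding sS_def by (rule sum.swap)
    thus ?thesis unfolding sS_def by (simp add: sum.distrib)
  qed
  have f5: "(\<Sum>a\<in>A. pp A v a * qq A v a) = sRq A v + 2*sRd A v"
    unfolding sRq_def sRd_def pp_def by (simp add: algebra_simps sum.distrib sum_distrib_left sum_subtractf)
  show ?thesis
    using SQ[OF A, of "\<lambda>a b. v(a,b)+v(b,a)" m "pp A v" \<kappa>] f1 f2 f3 f4 f5
    by (simp add: sRq_def[symmetric] sRs_def[symmetric])
qed

lemma ZD: fixes m \<kappa> :: real assumes A: "finite A"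
  shows "(\<Sum>a\<in>A. ((v(a,a)+v(a,a)) + m*pp A v a + m*pp A v a + \<kappa>)*((v(a,a)+v(a,a)) + m*pp A v a + m*pp A v a + \<kappa>))
   = 4*sDd A v + 8*m*sRd A v + 4*m*m*sRq A v + 4*\<kappa>*sT A v + 4*\<kappa>*m*sRs A v + real (card A)*\<kappa>*\<kappa>"
  unfolding sDd_def sRd_def sRq_def sT_def sRs_def
  by (simp add: algebra_simps sum.distrib sum_distrib_left)

lemma offdiag: assumes A: "finite A"
  shows "(\<Sum>a\<in>A. \<Sum>b\<in>A. f a b * f a b) - (\<Sum>a\<in>A. f a a * f a a) \<ge> (0::real)"
proof -
  have "\<And>a. a \<in> A \<Longrightarrow> (\<Sum>b\<in>A. f a b * f a b) = f a a * f a a + (\<Sum>b\<in>A-{a}. f a b * f a b)"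
    using A by (simp add: sum.remove)
  hence "(\<Sum>a\<in>A. \<Sum>b\<in>A. f a b * f a b) = (\<Sum>a\<in>A. f a a * f a a) + (\<Sum>a\<in>A. \<Sum>b\<in>A-{a}. f a b * f a b)"
    by (simp add: sum.distrib)
  moreover have "(\<Sum>a\<in>A. \<Sum>b\<in>A-{a}. f a b * f a b) \<ge> 0" by (intro sum_nonneg) auto
  ultimately show ?thesis by simp
qed

lemma Q_agg: assumes A: "finite A"
  shows "MM A v (FF b g) = g*(sS A v*sS A v) + (b-g)*(sT A v*sS A v + sT A v*sS A v + (sRq A v+4*sRd A v+4*sDd A v))
    + (1-2*b+g)*(sT A v*sT A v + sV A v + sW A v) + 2*(g-b)*(2*sRd A v+4*sDd A v) + (-2+8*b-6*g)*sDd A v"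
proof -
  have "MM A v (FF b g) = g * MM A v (\<lambda>i j k l. 1) + (b-g)*(MM A v (\<lambda>i j k l. ee i j) + MM A v (\<lambda>i j k l. ee k l)
   + (MM A v (\<lambda>i j k l. ee i k) + MM A v (\<lambda>i j k l. ee j l) + MM A v (\<lambda>i j k l. ee i l) + MM A v (\<lambda>i j k l. ee j k)))
   + (1-2*b+g)*(MM A v (\<lambda>i j k l. ee i j*ee k l) + MM A v (\<lambda>i j k l. ee i k*ee j l) + MM A v (\<lambda>i j k l. ee i l*ee j k))
   + (2*(g-b))*(MM A v (\<lambda>i j k l. ee i j*ee i k) + MM A v (\<lambda>i j k l. ee i j*ee i l) + MM A v (\<lambda>i j k l. ee i k*ee i l) + MM A v (\<lambda>i j k l. ee j k*ee j l))
   + (-2+8*b-6*g)*MM A v (\<lambda>i j k l. ee i j*ee i k*ee i l)"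
    unfolding FF_def by (simp only: MM_add MM_cmul add.assoc)
  also have "\<dots> = g*(sS A v*sS A v) + (b-g)*(sT A v*sS A v + sT A v*sS A v + (sRq A v+4*sRd A v+4*sDd A v))
    + (1-2*b+g)*(sT A v*sT A v + sV A v + sW A v) + 2*(g-b)*(2*sRd A v+4*sDd A v) + (-2+8*b-6*g)*sDd A v"
    by (simp only: P1[OF A] P2a[OF A] P2b[OF A] P3[OF A] P4a[OF A] P4b[OF A] P4c[OF A] P5[OF A] P6[OF A])
  finally show ?thesis .
qed

lemma sum_pairs: "(\<Sum>p\<in>A\<times>B. h p) = (\<Sum>i\<in>A. \<Sum>j\<in>B. h (i,j))"
  by (simp add: sum.cartesian_product)

lemma odd_syms_mset: "odd_syms i j k l = {s \<in> set_mset (mset [i,j,k,l]). odd (count (mset [i,j,k,l]) s)}"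
  unfolding odd_syms_def count_mset count_list_eq_length_filter
  by (auto simp: eq_commute)

lemma psd_part: assumes N: "N \<ge> 4"
  shows "(\<Sum>p\<in>{1..N}\<times>{1..N}. \<Sum>q\<in>{1..N}\<times>{1..N}. v p * Ycor N p q * v q) \<ge> 0"
proof -
  let ?A = "{1..N}"
  have A: "finite ?A" by simp
  have cA: "card ?A = N" by simp
  define n where "n = real N"
  have n4: "n \<ge> 4" using N unfolding n_def by simp
  define b where "b = - 1 / (real N - 1)"
  define g where "g = 3 / ((real N - 1) * (real N - 3))"
  have "(\<Sum>p\<in>?A\<times>?A. \<Sum>q\<in>?A\<times>?A. v p * Ycor N p q * v q) = MM ?A v (FF b g)"
    unfolding MM_def sum_pairs b_def g_def Ycor_FF by (simp add: algebra_simps)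
  also have "\<dots> = g*(sS ?A v*sS ?A v) + (b-g)*(sT ?A v*sS ?A v + sT ?A v*sS ?A v + (sRq ?A v+4*sRd ?A v+4*sDd ?A v))
    + (1-2*b+g)*(sT ?A v*sT ?A v + sV ?A v + sW ?A v) + 2*(g-b)*(2*sRd ?A v+4*sDd ?A v) + (-2+8*b-6*g)*sDd ?A v"
    by (rule Q_agg[OF A])
  finally have Q: "(\<Sum>p\<in>?A\<times>?A. \<Sum>q\<in>?A\<times>?A. v p * Ycor N p q * v q) = \<dots>" .
  define S where "S = sS ?A v"
  define T where "T = sT ?A v"
  define m where "m = -1/(n-2)"
  define k where "k = (2*S-2*T)/((n-1)*(n-2))"
  have Rs: "sRs ?A v = 2*S - 2*T" unfolding S_def T_def by (rule Rs_eq[OF A])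
  note zf = ZF[OF A, of v m k]
  note zd = ZD[OF A, of v m k]
  note od = offdiag[OF A, of "\<lambda>a b. (v(a,b)+v(b,a)) + m*pp ?A v a + m*pp ?A v b + k"]
  have E: "(2*sV ?A v+2*sW ?A v) + 2*m*(sRq ?A v+2*sRd ?A v) + 2*m*(sRq ?A v+2*sRd ?A v) + 2*k*(2*S) + 2*n*m*m*sRq ?A v
     + 2*m*m*(2*S-2*T)*(2*S-2*T) + 4*n*k*m*(2*S-2*T) + n*n*k*k
     - (4*sDd ?A v + 8*m*sRd ?A v + 4*m*m*sRq ?A v + 4*k*T + 4*k*m*(2*S-2*T) + n*k*k) \<ge> 0"
    using od unfolding zf zd Rs cA S_def[symmetric] T_def[symmetric] n_def[symmetric] by simp
  have coef: "n*(n-2)/(2*(n-1)*(n-3)) \<ge> 0" using n4 by simp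
  note alg1 = alg[OF n4, where S=S and T=T and V="sV ?A v" and W="sW ?A v" and Rq="sRq ?A v" and Rd="sRd ?A v" and Dd="sDd ?A v"]
  note E' = E[unfolded m_def k_def]
  have X: "0 \<le> (T - (2*S-2*T)/(2*(n-1)))*(T - (2*S-2*T)/(2*(n-1)))" by (rule zero_le_square)
  note Y = mult_nonneg_nonneg[OF coef E']
  have L: "0 \<le> 3/((n-1)*(n-3))*(S*S) + (-1/(n-1)-3/((n-1)*(n-3)))*(T*S + T*S + (sRq ?A v+4*sRd ?A v+4*sDd ?A v)) + (1-2*(-1/(n-1))+3/((n-1)*(n-3)))*(T*T + sV ?A v + sW ?A v) + 2*(3/((n-1)*(n-3))- -1/(n-1))*(2*sRd ?A v+4*sDd ?A v) + (-2+8*(-1/(n-1))-6*(3/((n-1)*(n-3))))*sDd ?A v"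
    apply (subst alg1)
    apply (rule add_nonneg_nonneg)
     apply (rule X)
    apply (rule Y)
    done
  show ?thesis using L
 unfolding Q b_def g_def S_def T_def n_def .
qed

lemma Ycor_perm: "mset [a,b,c,d] = mset [i,j,k,l] \<Longrightarrow> Ycor N (a,b) (c,d) = Ycor N (i,j) (k,l)"
  unfolding Ycor_def odd_syms_mset by (simp only: prod.case)

lemma Ycor_sym: "Ycor N (i,j) (k,l) = Ycor N (k,l) (i,j)"
  by (rule Ycor_perm) (simp add: add_mset_commute)

lemma odd_kk: "odd_syms i j k k = {s \<in> {i,j}. odd (count (mset [i,j]) s)}"
  unfolding odd_syms_mset by auto
lemma Ycor_diag: "Ycor N (i,j) (k,k) = Ycor N (i,j) (k',k')"
  unfolding Ycor_def by (simp only: prod.case odd_kk)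

lemma Ycor_one: "Ycor N (i,i) (i,i) = 1"
  unfolding Ycor_def odd_syms_def CI CE by simp

lemma Ycor_ext: "Ycor N (1,i) (1,j) = Xcor N i j"
  unfolding Ycor_def odd_syms_def CI CE Xcor_def
  by (cases "i=1"; cases "j=1"; cases "i=j") (simp_all add: card_insert_if)

theorem corollary6:
  fixes N :: nat
  assumes "N \<ge> 4"
  shows "deg4_pseudomoment N (Ycor N) \<and> extends N (Ycor N) (Xcor N)"
proof -
  have psd: "psd_pairs N (Ycor N)"
    unfolding psd_pairs_def
  proof (intro conjI ballI allI)
    fix p q assume "p \<in> {1..N}\<times>{1..N}" "q \<in> {1..N}\<times>{1..N}"
    show "Ycor N p q = Ycor N q p" by (cases p; cases q) (simp add: Ycor_sym)
  next
    fix v :: "nat\<times>nat \<Rightarrow> real"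
    show "0 \<le> (\<Sum>p\<in>{1..N}\<times>{1..N}. \<Sum>q\<in>{1..N}\<times>{1..N}. v p * Ycor N p q * v q)"
      by (rule psd_part[OF assms])
  qed
  show ?thesis
    unfolding deg4_pseudomoment_def extends_def
    using psd Ycor_diag Ycor_one Ycor_ext Ycor_perm by blast
qed

end
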